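(* Let $\ast$ be a continuous $t$-norm and let $\{(X_n,M_n,\ast)\}_{n\in\mathbb N}$ be a sequence of nonempty compact non-Archimedean fuzzy metric spaces satisfying: (1) $\ast$ satisfies (TN1); (2) there exists a nondecreasing left-continuous function $C:(0,\infty)\to(0,1]$ with $0<C(s)\le\mathrm{diam}_s(X_n)$ for all $s>0$ and all $n$; (3) for every $t>0$ and $0<\varepsilon<1$ there is $N(\varepsilon,t)\in\mathbb N$ with $\mathrm{Cov}(X_n,\varepsilon,t)\le N(\varepsilon,t)$ for all $n$; (4) for every $t>0$ and $0<\varepsilon<1$, with $N=N(\varepsilon,t)$, there exist, for each $n$, a $(t,\varepsilon)$-net $\{x_i^n\}_{i=1}^N$ in $X_n$ such that for all $n,m$, all $s>t$ and all $i,j\in\{1,\dots,N\}$: if $M_n(x_i^n,x_j^n,s)<M_m(x_i^m,x_j^m,s)$ then $\dfrac{M_n(x_i^n,x_j^n,s)}{M_m(x_i^m,x_j^m,s)\ast(1-\varepsilon)}\ge\dfrac{M_n(x_i^n,x_j^n,t)}{M_m(x_i^m,x_j^m,t)\ast(1-\varepsilon)}$. Then $\{(X_n,M_n,\ast)\}_{n}$ has a Cauchy subsequence with respect to $M_{GH}$.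
   Context: A continuous $t$-norm is a binary operation $\ast:[0,1]\times[0,1]\to[0,1]$ which is associative, commutative, continuous, satisfies $a\ast 1=a$ for all $a$, and is monotone. Property (TN1): $a-a\ast b\ge a\ast(1-b)$ for all $a,b\in[0,1]$. A fuzzy metric space $(X,M,\ast)$: $M:X\times X\times[0,\infty)\to[0,1]$ with, for all $x,y,z$ and $t,s>0$: (KM1) $M(x,y,0)=0$; (KM2) $M(x,y,t)=1$ for all $t>0$ iff $x=y$; (KM3) $M(x,y,t)=M(y,x,t)$; (KM4) $M(x,y,t)\ast M(y,z,s)\le M(x,z,t+s)$; (KM5) $M(x,y,\cdot)$ left continuous on $[0,\infty)$. Non-Archimedean: $M(x,z,\max\{t,s\})\ge M(x,y,t)\ast M(y,z,s)$. Balls $B(x,\varepsilon,t)=\{y: M(x,y,t)>1-\varepsilon\}$ generate the topology; "compact" refers to it. $H_M(A,B,t)=\min\{\inf_{a\in A}\sup_{b\in B}M(a,b,t),\ \inf_{b\in B}\sup_{a\in A}M(a,b,t)\}$ for nonempty compact $A,B$. A fuzzy metric on $X\sqcup Y$ is admissible if it restricts to the given ones on $X$ and $Y$; $M_{GH}(X,Y,t)=\sup\{H_M(X,Y,t): M$ admissible non-Archimedean fuzzy metric on $X\sqcup Y$ with $t$-norm $\ast\}$. A sequence $(X_n)$ is Cauchy w.r.t. $M_{GH}$ if for every $t>0$, $0<\varepsilon<1$ there is $n_0$ with $M_{GH}(X_n,X_m,t)>1-\varepsilon$ for all $n,m\ge n_0$. A family $\{x_i\}_{i=1}^N$ is a $(t,\varepsilon)$-net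 in $X$ if each $x\in X$ has some $i$ with $M(x,x_i,t)>1-\varepsilon$. $\mathrm{Cov}(X,\varepsilon,t)$ is the minimal cardinality of $C\subseteq X$ with $X=\bigcup_{c\in C}B(c,\varepsilon,t)$. $\mathrm{diam}_s(X)=\inf\{M(x,y,s):x,y\in X\}$. *)

theory Defs
  imports "HOL-Analysis.Analysis"
begin

text \<open>Continuous t-norm on [0,1] (values outside [0,1] are irrelevant).\<close>
definition cont_tnorm :: "(real \<Rightarrow> real \<Rightarrow> real) \<Rightarrow> bool" where
  "cont_tnorm T \<longleftrightarrow>
     (\<forall>a\<in>{0..1}. \<forall>b\<in>{0..1}. T a b \<in> {0..1}) \<and>
     (\<forall>a\<in>{0..1}. \<forall>b\<in>{0..1}. \<forall>c\<in>{0..1}. T (T a b) c = T a (T b c)) \<and>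
     (\<forall>a\<in>{0..1}. \<forall>b\<in>{0..1}. T a b = T b a) \<and>
     continuous_on ({0..1} \<times> {0..1}) (\<lambda>(a, b). T a b) \<and>
     (\<forall>a\<in>{0..1}. T a 1 = a) \<and>
     (\<forall>a\<in>{0..1}. \<forall>b\<in>{0..1}. \<forall>c\<in>{0..1}. \<forall>d\<in>{0..1}.
        a \<le> c \<longrightarrow> b \<le> d \<longrightarrow> T a b \<le> T c d)"

definition TN1 :: "(real \<Rightarrow> real \<Rightarrow> real) \<Rightarrow> bool" where
  "TN1 T \<longleftrightarrow> (\<forall>a\<in>{0..1}. \<forall>b\<in>{0..1}. a - T a b \<ge> T a (1 - b))"

text \<open>Fuzzy metric space (X, M, T) (Kramosil--Michalek style, KM1--KM5), on a carrier set X.\<close>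
definition fuzzy_metric :: "'a set \<Rightarrow> ('a \<Rightarrow> 'a \<Rightarrow> real \<Rightarrow> real) \<Rightarrow> (real \<Rightarrow> real \<Rightarrow> real) \<Rightarrow> bool" where
  "fuzzy_metric X M T \<longleftrightarrow>
     (\<forall>x\<in>X. \<forall>y\<in>X. \<forall>t\<ge>0. 0 \<le> M x y t \<and> M x y t \<le> 1) \<and>
     (\<forall>x\<in>X. \<forall>y\<in>X. M x y 0 = 0) \<and>
     (\<forall>x\<in>X. \<forall>y\<in>X. (\<forall>t>0. M x y t = 1) \<longleftrightarrow> x = y) \<and>
     (\<forall>x\<in>X. \<forall>y\<in>X. \<forall>t>0. M x y t = M y x t) \<and>
     (\<forall>x\<in>X. \<forall>y\<in>X. \<forall>z\<in>X. \<forall>t>0. \<forall>s>0. T (M x y t) (M y z s) \<le> M x z (t + s)) \<and>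
     (\<forall>x\<in>X. \<forall>y\<in>X. \<forall>t>0. (M x y \<longlongrightarrow> M x y t) (at_left t))"

definition na_fuzzy_metric :: "'a set \<Rightarrow> ('a \<Rightarrow> 'a \<Rightarrow> real \<Rightarrow> real) \<Rightarrow> (real \<Rightarrow> real \<Rightarrow> real) \<Rightarrow> bool" where
  "na_fuzzy_metric X M T \<longleftrightarrow> fuzzy_metric X M T \<and>
     (\<forall>x\<in>X. \<forall>y\<in>X. \<forall>z\<in>X. \<forall>t>0. \<forall>s>0. M x z (max t s) \<ge> T (M x y t) (M y z s))"

definition fball :: "'a set \<Rightarrow> ('a \<Rightarrow> 'a \<Rightarrow> real \<Rightarrow> real) \<Rightarrow> 'a \<Rightarrow> real \<Rightarrow> real \<Rightarrow> 'a set" where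
  "fball X M x e t = {y\<in>X. M x y t > 1 - e}"

definition fopen :: "'a set \<Rightarrow> ('a \<Rightarrow> 'a \<Rightarrow> real \<Rightarrow> real) \<Rightarrow> 'a set \<Rightarrow> bool" where
  "fopen X M U \<longleftrightarrow> U \<subseteq> X \<and>
     (\<forall>x\<in>U. \<exists>e t. 0 < e \<and> e < 1 \<and> 0 < t \<and> fball X M x e t \<subseteq> U)"

definition fcompact :: "'a set \<Rightarrow> ('a \<Rightarrow> 'a \<Rightarrow> real \<Rightarrow> real) \<Rightarrow> 'a set \<Rightarrow> bool" where
  "fcompact X M K \<longleftrightarrow> K \<subseteq> X \<and>
     (\<forall>\<U>. (\<forall>U\<in>\<U>. fopen X M U) \<and> K \<subseteq> \<Union>\<U> \<longrightarrow>
        (\<exists>\<F>\<subseteq>\<U>. finite \<F> \<and> K \<subseteq> \<Union>\<F>))"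

definition H_M :: "('b \<Rightarrow> 'b \<Rightarrow> real \<Rightarrow> real) \<Rightarrow> 'b set \<Rightarrow> 'b set \<Rightarrow> real \<Rightarrow> real" where
  "H_M M A B t = min (INF a\<in>A. SUP b\<in>B. M a b t) (INF b\<in>B. SUP a\<in>A. M a b t)"

text \<open>Admissible fuzzy metric on the disjoint union X \<squnion> Y (realised as Inl ` X \<union> Inr ` Y).\<close>
definition admissible ::
  "'a set \<Rightarrow> ('a \<Rightarrow> 'a \<Rightarrow> real \<Rightarrow> real) \<Rightarrow> 'a set \<Rightarrow> ('a \<Rightarrow> 'a \<Rightarrow> real \<Rightarrow> real) \<Rightarrow>
   (real \<Rightarrow> real \<Rightarrow> real) \<Rightarrow> ('a + 'a \<Rightarrow> 'a + 'a \<Rightarrow> real \<Rightarrow> real) \<Rightarrow> bool" where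
  "admissible X MX Y MY T Mu \<longleftrightarrow>
     na_fuzzy_metric (Inl ` X \<union> Inr ` Y) Mu T \<and>
     (\<forall>a\<in>X. \<forall>b\<in>X. \<forall>t\<ge>0. Mu (Inl a) (Inl b) t = MX a b t) \<and>
     (\<forall>a\<in>Y. \<forall>b\<in>Y. \<forall>t\<ge>0. Mu (Inr a) (Inr b) t = MY a b t)"

definition M_GH ::
  "(real \<Rightarrow> real \<Rightarrow> real) \<Rightarrow> 'a set \<Rightarrow> ('a \<Rightarrow> 'a \<Rightarrow> real \<Rightarrow> real) \<Rightarrow> 'a set \<Rightarrow>
   ('a \<Rightarrow> 'a \<Rightarrow> real \<Rightarrow> real) \<Rightarrow> real \<Rightarrow> real" where
  "M_GH T X MX Y MY t =
     Sup {H_M Mu (Inl ` X) (Inr ` Y) t | Mu. admissible X MX Y MY T Mu}"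

definition fnet :: "'a set \<Rightarrow> ('a \<Rightarrow> 'a \<Rightarrow> real \<Rightarrow> real) \<Rightarrow> real \<Rightarrow> real \<Rightarrow> nat \<Rightarrow> (nat \<Rightarrow> 'a) \<Rightarrow> bool" where
  "fnet X M t e N x \<longleftrightarrow> (\<forall>i\<in>{1..N}. x i \<in> X) \<and>
     (\<forall>y\<in>X. \<exists>i\<in>{1..N}. M y (x i) t > 1 - e)"

definition Cov :: "'a set \<Rightarrow> ('a \<Rightarrow> 'a \<Rightarrow> real \<Rightarrow> real) \<Rightarrow> real \<Rightarrow> real \<Rightarrow> nat" where
  "Cov X M e t = (LEAST n. \<exists>C\<subseteq>X. finite C \<and> card C = n \<and> X = (\<Union>c\<in>C. fball X M c e t))"

definition fdiam :: "'a set \<Rightarrow> ('a \<Rightarrow> 'a \<Rightarrow> real \<Rightarrow> real) \<Rightarrow> real \<Rightarrow> real" where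
  "fdiam X M s = Inf {M x y s | x y. x \<in> X \<and> y \<in> X}"

end

theory Submission
  imports Defs
begin

definition cl :: "real \<Rightarrow> real" where "cl x = max 0 (min 1 x)"
definition TT :: "(real \<Rightarrow> real \<Rightarrow> real) \<Rightarrow> real \<Rightarrow> real \<Rightarrow> real" where
  "TT T a b = T (cl a) (cl b)"

lemma cl_range: "cl x \<in> {0..1}" by (auto simp: cl_def)
lemma cl_id: "x \<in> {0..1} \<Longrightarrow> cl x = x" by (auto simp: cl_def)
lemma cl_mono: "x \<le> y \<Longrightarrow> cl x \<le> cl y" by (auto simp: cl_def)

context
  fixes T :: "real \<Rightarrow> real \<Rightarrow> real"
  assumes tn: "cont_tnorm T"
begin

lemma T_range: "a \<in> {0..1} \<Longrightarrow> b \<in> {0..1} \<Longrightarrow> T a b \<in> {0..1}"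
  using tn unfolding cont_tnorm_def by blast
lemma T_assoc: "a \<in> {0..1} \<Longrightarrow> b \<in> {0..1} \<Longrightarrow> c \<in> {0..1} \<Longrightarrow> T (T a b) c = T a (T b c)"
  using tn unfolding cont_tnorm_def by blast
lemma T_comm: "a \<in> {0..1} \<Longrightarrow> b \<in> {0..1} \<Longrightarrow> T a b = T b a"
  using tn unfolding cont_tnorm_def by blast
lemma T_one: "a \<in> {0..1} \<Longrightarrow> T a 1 = a"
  using tn unfolding cont_tnorm_def by blast
lemma T_mono: "a \<in> {0..1} \<Longrightarrow> b \<in> {0..1} \<Longrightarrow> c \<in> {0..1} \<Longrightarrow> d \<in> {0..1} \<Longrightarrow>
   a \<le> c \<Longrightarrow> b \<le> d \<Longrightarrow> T a b \<le> T c d"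
  using tn unfolding cont_tnorm_def by blast
lemma T_cont: "continuous_on ({0..1} \<times> {0..1}) (\<lambda>(a, b). T a b)"
  using tn unfolding cont_tnorm_def by blast
lemma T_one_left: "a \<in> {0..1} \<Longrightarrow> T 1 a = a"
  using T_comm[of 1 a] T_one[of a] by auto
lemma T_zero: "a \<in> {0..1} \<Longrightarrow> T a 0 = 0"
proof -
  assume a: "a \<in> {0..1}"
  have "T a 0 \<le> T 1 0" by (rule T_mono) (use a in auto)
  also have "T 1 0 = 0" using T_one_left[of 0] by simp
  finally show ?thesis using T_range[OF a, of 0] by auto
qed
lemma T_le1: "a \<in> {0..1} \<Longrightarrow> b \<in> {0..1} \<Longrightarrow> T a b \<le> a"
  using T_mono[of a b a 1] T_one[of a] by auto

lemma TT_eq: "a \<in> {0..1} \<Longrightarrow> b \<in> {0..1} \<Longrightarrow> TT T a b = T a b"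
  by (simp add: TT_def cl_id)
lemma TT_range: "TT T a b \<in> {0..1}"
  unfolding TT_def by (rule T_range[OF cl_range cl_range])
lemma TT_nonneg: "0 \<le> TT T a b" using TT_range[of a b] by auto
lemma TT_assoc: "TT T (TT T a b) c = TT T a (TT T b c)"
  unfolding TT_def using T_assoc[OF cl_range cl_range cl_range] T_range[OF cl_range cl_range]
  by (simp add: cl_id)
lemma TT_comm: "TT T a b = TT T b a"
  unfolding TT_def by (rule T_comm[OF cl_range cl_range])
lemma TT_mono: "a \<le> c \<Longrightarrow> b \<le> d \<Longrightarrow> TT T a b \<le> TT T c d"
  unfolding TT_def by (rule T_mono[OF cl_range cl_range cl_range cl_range cl_mono cl_mono])
lemma TT_one: "a \<in> {0..1} \<Longrightarrow> TT T a 1 = a"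
  by (simp add: TT_def cl_id T_one)
lemma TT_one_left: "a \<in> {0..1} \<Longrightarrow> TT T 1 a = a"
  by (simp add: TT_def cl_id T_one_left)
lemma TT_zero: "TT T a 0 = 0"
  unfolding TT_def using T_zero[OF cl_range] by (simp add: cl_def)
lemma TT_zero_left: "TT T 0 a = 0"
  using TT_zero TT_comm by metis
lemma TT_le1: "a \<in> {0..1} \<Longrightarrow> TT T a b \<le> a"
  using TT_mono[of a a b 1] TT_one[of a] cl_range[of b] unfolding TT_def
  by (metis T_le1 cl_id cl_range)
lemma TT_le2: "b \<in> {0..1} \<Longrightarrow> TT T a b \<le> b"
  using TT_le1 TT_comm by metis
lemma TT_left_commute: "TT T a (TT T b c) = TT T b (TT T a c)"
  by (metis TT_assoc TT_comm)

lemma TT_rearr: "TT T (TT T (TT T P c) Q) (TT T (TT T P' c) Q') = TT T P (TT T (TT T c (TT T c (TT T Q Q'))) P')"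
  by (simp only: TT_assoc TT_comm TT_left_commute)

lemma TT_rearr2: "TT T (TT T (TT T P c) Q) (TT T (TT T P' c) Q') = TT T Q (TT T (TT T c (TT T c (TT T P P'))) Q')"
  by (simp only: TT_assoc TT_comm TT_left_commute)

lemma TT_cont: "continuous_on UNIV (\<lambda>p. TT T (fst p) (snd p))"
proof -
  have c1: "continuous_on UNIV (\<lambda>p::real\<times>real. (cl (fst p), cl (snd p)))"
    unfolding cl_def by (intro continuous_intros)
  have "continuous_on UNIV ((\<lambda>(a, b). T a b) \<circ> (\<lambda>p::real\<times>real. (cl (fst p), cl (snd p))))"
    by (rule continuous_on_compose[OF c1]) (rule continuous_on_subset[OF T_cont], auto simp: cl_def)
  then show ?thesis by (simp add: TT_def o_def)
qed

lemma tendsto_TT: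
  assumes "(f \<longlongrightarrow> a) F" "(g \<longlongrightarrow> b) F"
  shows "((\<lambda>s. TT T (f s) (g s)) \<longlongrightarrow> TT T a b) F"
proof -
  have "isCont (\<lambda>p. TT T (fst p) (snd p)) (a, b)"
    using TT_cont continuous_on_eq_continuous_at by blast
  from isCont_tendsto_compose[OF this tendsto_Pair[OF assms]] show ?thesis by simp
qed

lemma TT_cont1: "continuous_on UNIV (\<lambda>z. TT T (f z) (g z))" if "continuous_on UNIV f" "continuous_on UNIV g"
  for f g :: "real \<Rightarrow> real"
proof -
  have "continuous_on UNIV ((\<lambda>p. TT T (fst p) (snd p)) \<circ> (\<lambda>z. (f z, g z)))"
    by (rule continuous_on_compose[OF _ continuous_on_subset[OF TT_cont]]) (auto intro!: continuous_intros that)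
  then show ?thesis by (simp add: o_def)
qed

lemma T_strict:
  assumes tn1: "TN1 T" and a: "0 < a" "a \<le> 1" and b: "0 \<le> b" "b < 1"
  shows "T a b < a"
proof (rule ccontr)
  assume "\<not> T a b < a"
  then have ab: "TT T a b = a" using TT_le1[of a b] a b by (simp add: TT_eq)
  define S where "S = {0..1} \<inter> {c. TT T a c = a}"
  have "closed {c. TT T a c = a}"
    by (rule closed_Collect_eq) (auto intro!: TT_cont1 continuous_intros)
  then have clS: "closed S" unfolding S_def by auto
  have bS: "b \<in> S" using ab b by (auto simp: S_def)
  have bdd: "bdd_below S" unfolding S_def by (auto intro: bdd_belowI[of _ 0])
  define p where "p = Inf S"
  have pS: "p \<in> S" unfolding p_def using closed_contains_Inf[OF _ bdd clS] bS by blast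
  have pb: "p \<le> b" unfolding p_def using cInf_lower[OF bS bdd] .
  have p01: "p \<in> {0..1}" and ap: "TT T a p = a" using pS by (auto simp: S_def)
  have "TT T a (TT T p p) = a" by (metis TT_assoc ap)
  then have "TT T p p \<in> S" using TT_range by (auto simp: S_def)
  then have "p \<le> TT T p p" unfolding p_def using cInf_lower[OF _ bdd] by blast
  then have pp: "TT T p p = p" using TT_le1[OF p01, of p] by auto
  have "a - T a p \<ge> T a (1 - p)" using tn1 a p01 unfolding TN1_def by auto
  then have a1p: "TT T a (1 - p) \<le> 0" using ap a p01 by (simp add: TT_eq)
  show False
  proof (cases "p \<le> 1/2")
    case True
    have "TT T a p \<le> TT T a (1 - p)" by (rule TT_mono) (use True in auto)
    then show False using ap a1p a by auto
  next
    case False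
    have cont: "continuous_on {0..1} (\<lambda>z. TT T p z)"
      by (rule continuous_on_subset[OF TT_cont1]) (auto intro!: continuous_intros)
    have "TT T p 0 \<le> 1/2" by (simp add: TT_zero)
    moreover have "1/2 \<le> TT T p 1" using False p01 by (simp add: TT_one)
    ultimately obtain z where z: "0 \<le> z" "z \<le> 1" "TT T p z = 1/2"
      using IVT'[of "\<lambda>z. TT T p z" 0 "1/2" 1, OF _ _ _ cont] by auto
    have "TT T p (1/2) = TT T p (TT T p z)" by (simp only: z(3))
    also have "\<dots> = TT T z p" by (metis TT_assoc TT_comm pp)
    also have "\<dots> = 1/2" using z TT_comm by metis
    finally have h: "TT T p (1/2) = 1/2" .
    have "p - T p (1/2) \<ge> T p (1 - 1/2)" using tn1 p01 unfolding TN1_def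
    proof -
      have "(1/2::real) \<in> {0..1}" by auto
      then show ?thesis using tn1 p01 unfolding TN1_def by blast
    qed
    then have "p - TT T p (1/2) \<ge> TT T p (1/2)" using p01 by (simp add: TT_eq)
    then show False using h pb b by auto
  qed
qed

end

fun gmax :: "(nat \<Rightarrow> real) \<Rightarrow> nat \<Rightarrow> real" where
  "gmax f 0 = 0"
| "gmax f (Suc n) = max (gmax f n) (f (Suc n))"

lemma gmax_nonneg: "0 \<le> gmax f n" by (induct n) auto
lemma gmax_ge: "i \<in> {1..n} \<Longrightarrow> f i \<le> gmax f n"
  by (induct n) (auto simp: le_Suc_eq max_def)
lemma gmax_cases: "gmax f n = 0 \<or> (\<exists>i\<in>{1..n}. gmax f n = f i)"
  by (induct n) (auto simp: max_def)
lemma gmax_le: "0 \<le> c \<Longrightarrow> (\<And>i. i \<in> {1..n} \<Longrightarrow> f i \<le> c) \<Longrightarrow> gmax f n \<le> c"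
  by (induct n) auto
lemma tendsto_gmax:
  "(\<And>i. i \<in> {1..n} \<Longrightarrow> ((\<lambda>s. F i s) \<longlongrightarrow> L i) G) \<Longrightarrow>
    ((\<lambda>s. gmax (\<lambda>i. F i s) n) \<longlongrightarrow> gmax L n) G"
  by (induct n) (auto intro!: tendsto_max)


section \<open>Fuzzy metric basics\<close>

context
  fixes T :: "real \<Rightarrow> real \<Rightarrow> real" and X :: "'a set" and M
  assumes tn: "cont_tnorm T" and fm: "na_fuzzy_metric X M T"
begin

lemma fm_range: "x \<in> X \<Longrightarrow> y \<in> X \<Longrightarrow> 0 \<le> t \<Longrightarrow> M x y t \<in> {0..1}"
  using fm unfolding na_fuzzy_metric_def fuzzy_metric_def by auto
lemma fm_refl: "x \<in> X \<Longrightarrow> 0 < t \<Longrightarrow> M x x t = 1"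
  using fm unfolding na_fuzzy_metric_def fuzzy_metric_def by blast
lemma fm_sym: "x \<in> X \<Longrightarrow> y \<in> X \<Longrightarrow> 0 < t \<Longrightarrow> M x y t = M y x t"
  using fm unfolding na_fuzzy_metric_def fuzzy_metric_def by blast
lemma fm_na: "x \<in> X \<Longrightarrow> y \<in> X \<Longrightarrow> z \<in> X \<Longrightarrow> 0 < t \<Longrightarrow> 0 < s \<Longrightarrow>
    T (M x y t) (M y z s) \<le> M x z (max t s)"
  using fm unfolding na_fuzzy_metric_def by blast
lemma fm_naTT: "x \<in> X \<Longrightarrow> y \<in> X \<Longrightarrow> z \<in> X \<Longrightarrow> 0 < t \<Longrightarrow> 0 < s \<Longrightarrow>
    TT T (M x y t) (M y z s) \<le> M x z (max t s)"
  using fm_na TT_eq[OF tn] fm_range by simp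
lemma fm_lc: "x \<in> X \<Longrightarrow> y \<in> X \<Longrightarrow> 0 < t \<Longrightarrow> (M x y \<longlongrightarrow> M x y t) (at_left t)"
  using fm unfolding na_fuzzy_metric_def fuzzy_metric_def by blast
lemma fm_mono: "x \<in> X \<Longrightarrow> y \<in> X \<Longrightarrow> 0 < v \<Longrightarrow> v \<le> w \<Longrightarrow> M x y v \<le> M x y w"
  using fm_na[of x y y v w] fm_refl[of y w] T_one[OF tn] fm_range[of x y v] by (simp add: max_def)

end

lemma mk_na_fm:
  assumes tn: "cont_tnorm T"
    and r: "\<forall>x\<in>Y. \<forall>y\<in>Y. \<forall>t\<ge>0. 0 \<le> M x y t \<and> M x y t \<le> 1"
    and z: "\<forall>x\<in>Y. \<forall>y\<in>Y. M x y 0 = 0"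
    and e: "\<forall>x\<in>Y. \<forall>y\<in>Y. (\<forall>t>0. M x y t = 1) \<longleftrightarrow> x = y"
    and s: "\<forall>x\<in>Y. \<forall>y\<in>Y. \<forall>t>0. M x y t = M y x t"
    and na: "\<forall>x\<in>Y. \<forall>y\<in>Y. \<forall>z\<in>Y. \<forall>t>0. \<forall>s>0. M x z (max t s) \<ge> T (M x y t) (M y z s)"
    and lc: "\<forall>x\<in>Y. \<forall>y\<in>Y. \<forall>t>0. (M x y \<longlongrightarrow> M x y t) (at_left t)"
  shows "na_fuzzy_metric Y M T"
proof -
  have mono: "M x y v \<le> M x y w" if "x \<in> Y" "y \<in> Y" "0 < v" "v \<le> w" for x y v w
  proof -
    have "\<forall>t>0. M y y t = 1" using e that(2) by blast
    then have "M y y w = 1" using that by simp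
    moreover have "M x y v \<in> {0..1}" using r that by auto
    ultimately show ?thesis using na that T_one[OF tn, of "M x y v"] by (metis max.absorb2 order.strict_trans2)
  qed
  have "T (M x y t) (M y z s) \<le> M x z (t + s)"
    if "x \<in> Y" "y \<in> Y" "z \<in> Y" "0 < t" "0 < s" for x y z t s
  proof -
    have "T (M x y t) (M y z s) \<le> M x z (max t s)" using na that by blast
    also have "\<dots> \<le> M x z (t + s)" by (rule mono) (use that in auto)
    finally show ?thesis .
  qed
  then show ?thesis using r z e s na lc unfolding na_fuzzy_metric_def fuzzy_metric_def by blast
qed

lemma H_M_le1:
  assumes "SA \<noteq> {}" "SB \<noteq> {}" "\<forall>p\<in>SA. \<forall>q\<in>SB. 0 \<le> Mu p q t \<and> Mu p q t \<le> 1"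
  shows "H_M Mu SA SB t \<le> 1"
proof -
  obtain p0 where p0: "p0 \<in> SA" using assms by auto
  obtain q0 where q0: "q0 \<in> SB" using assms by auto
  have bdd: "bdd_above ((\<lambda>q. Mu p q t) ` SB)" if "p \<in> SA" for p
    using assms that by (auto intro!: bdd_aboveI[of _ 1])
  have ge0: "0 \<le> (SUP q\<in>SB. Mu p q t)" if "p \<in> SA" for p
    using cSUP_upper2[OF bdd[OF that] q0, of 0] assms that q0 by auto
  have "(INF p\<in>SA. SUP q\<in>SB. Mu p q t) \<le> (SUP q\<in>SB. Mu p0 q t)"
    by (rule cINF_lower[OF _ p0]) (auto intro!: bdd_belowI[of _ 0] ge0)
  also have "\<dots> \<le> 1" using assms p0 by (auto intro!: cSUP_least)
  finally show ?thesis unfolding H_M_def by simp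
qed

lemma H_M_ge:
  assumes "SA \<noteq> {}" "SB \<noteq> {}" "\<forall>p\<in>SA. \<forall>q\<in>SB. 0 \<le> Mu p q t \<and> Mu p q t \<le> 1"
    and "\<forall>p\<in>SA. \<exists>q\<in>SB. w \<le> Mu p q t" and "\<forall>q\<in>SB. \<exists>p\<in>SA. w \<le> Mu p q t"
  shows "w \<le> H_M Mu SA SB t"
proof -
  have b1: "bdd_above ((\<lambda>q. Mu p q t) ` SB)" if "p \<in> SA" for p
    using assms that by (auto intro!: bdd_aboveI[of _ 1])
  have b2: "bdd_above ((\<lambda>p. Mu p q t) ` SA)" if "q \<in> SB" for q
    using assms that by (auto intro!: bdd_aboveI[of _ 1])
  have "w \<le> (INF p\<in>SA. SUP q\<in>SB. Mu p q t)"
  proof (rule cINF_greatest[OF assms(1)])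
    fix p assume p: "p \<in> SA"
    then obtain q where "q \<in> SB" "w \<le> Mu p q t" using assms by blast
    then show "w \<le> (SUP q\<in>SB. Mu p q t)" using cSUP_upper2[OF b1[OF p]] by blast
  qed
  moreover have "w \<le> (INF q\<in>SB. SUP p\<in>SA. Mu p q t)"
  proof (rule cINF_greatest[OF assms(2)])
    fix q assume q: "q \<in> SB"
    then obtain p where "p \<in> SA" "w \<le> Mu p q t" using assms by blast
    then show "w \<le> (SUP p\<in>SA. Mu p q t)" using cSUP_upper2[OF b2[OF q]] by blast
  qed
  ultimately show ?thesis unfolding H_M_def by simp
qed


section \<open>Gluing\<close>

context
  fixes T :: "real \<Rightarrow> real \<Rightarrow> real" and A :: "'a set" and MA and B :: "'a set" and MB
    and x :: "nat \<Rightarrow> 'a" and y :: "nat \<Rightarrow> 'a" and N :: nat and \<tau> \<delta> :: real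
  assumes tn: "cont_tnorm T" and fA: "na_fuzzy_metric A MA T" and fB: "na_fuzzy_metric B MB T"
    and xin: "\<forall>i\<in>{1..N}. x i \<in> A" and yin: "\<forall>i\<in>{1..N}. y i \<in> B"
    and tau: "0 < \<tau>" and del1: "0 < \<delta>" and del2: "\<delta> < 1"
    and closeAB: "\<forall>u>\<tau>. \<forall>i\<in>{1..N}. \<forall>j\<in>{1..N}. T (MB (y i) (y j) u) (1 - \<delta>) \<le> MA (x i) (x j) u"
    and closeBA: "\<forall>u>\<tau>. \<forall>i\<in>{1..N}. \<forall>j\<in>{1..N}. T (MA (x i) (x j) u) (1 - \<delta>) \<le> MB (y i) (y j) u"
begin

definition crx :: "'a \<Rightarrow> 'a \<Rightarrow> real \<Rightarrow> real" where
  "crx a b s = (if s \<le> \<tau> then 0 else gmax (\<lambda>i. TT T (TT T (MA a (x i) s) (1 - \<delta>)) (MB (y i) b s)) N)"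

definition glue :: "'a + 'a \<Rightarrow> 'a + 'a \<Rightarrow> real \<Rightarrow> real" where
  "glue p q s = (case p of Inl a \<Rightarrow> (case q of Inl a' \<Rightarrow> MA a a' s | Inr b \<Rightarrow> crx a b s)
                          | Inr b \<Rightarrow> (case q of Inl a \<Rightarrow> crx a b s | Inr b' \<Rightarrow> MB b b' s))"

lemma c01: "1 - \<delta> \<in> {0..1}" using del1 del2 by auto

lemma crx_range: "crx a b s \<in> {0..1}"
  unfolding crx_def using gmax_nonneg gmax_le[of 1] TT_range[OF tn] by auto

lemma crx_ge: "\<tau> < s \<Longrightarrow> i \<in> {1..N} \<Longrightarrow> TT T (TT T (MA a (x i) s) (1 - \<delta>)) (MB (y i) b s) \<le> crx a b s"
  unfolding crx_def using gmax_ge[of i N] by auto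

lemma crx_cases: "crx a b s = 0 \<or> (\<tau> < s \<and> (\<exists>i\<in>{1..N}. crx a b s = TT T (TT T (MA a (x i) s) (1 - \<delta>)) (MB (y i) b s)))"
  unfolding crx_def using gmax_cases[of _ N] by auto

lemmas rA = fm_range[OF tn fA] and rB = fm_range[OF tn fB]
lemmas naA = fm_naTT[OF tn fA] and naB = fm_naTT[OF tn fB]
lemmas moA = fm_mono[OF tn fA] and moB = fm_mono[OF tn fB]
lemmas syA = fm_sym[OF tn fA] and syB = fm_sym[OF tn fB]

lemma case_AAB:
  assumes a: "a \<in> A" "a' \<in> A" and b: "b \<in> B" and ts: "0 < t" "0 < s"
  shows "TT T (MA a a' t) (crx a' b s) \<le> crx a b (max t s)"
proof (cases "crx a' b s = 0")
  case True then show ?thesis using crx_range by (simp add: TT_zero[OF tn])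
next
  case False
  then obtain i where s: "\<tau> < s" and i: "i \<in> {1..N}"
    and eq: "crx a' b s = TT T (TT T (MA a' (x i) s) (1 - \<delta>)) (MB (y i) b s)"
    using crx_cases by blast
  have xi: "x i \<in> A" and yi: "y i \<in> B" using i xin yin by auto
  have "TT T (MA a a' t) (crx a' b s) = TT T (TT T (TT T (MA a a' t) (MA a' (x i) s)) (1 - \<delta>)) (MB (y i) b s)"
    unfolding eq by (simp add: TT_assoc[OF tn])
  also have "\<dots> \<le> TT T (TT T (MA a (x i) (max t s)) (1 - \<delta>)) (MB (y i) b (max t s))"
    by (intro TT_mono[OF tn] order_refl naA moB) (use a b xi yi ts in auto)
  also have "\<dots> \<le> crx a b (max t s)" by (rule crx_ge) (use s i in auto)
  finally show ?thesis .
qed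

lemma case_ABB:
  assumes a: "a \<in> A" and b: "b \<in> B" "b' \<in> B" and ts: "0 < t" "0 < s"
  shows "TT T (crx a b t) (MB b b' s) \<le> crx a b' (max t s)"
proof (cases "crx a b t = 0")
  case True then show ?thesis using crx_range by (simp add: TT_zero_left[OF tn])
next
  case False
  then obtain i where t: "\<tau> < t" and i: "i \<in> {1..N}"
    and eq: "crx a b t = TT T (TT T (MA a (x i) t) (1 - \<delta>)) (MB (y i) b t)"
    using crx_cases by blast
  have xi: "x i \<in> A" and yi: "y i \<in> B" using i xin yin by auto
  have "TT T (crx a b t) (MB b b' s) = TT T (TT T (MA a (x i) t) (1 - \<delta>)) (TT T (MB (y i) b t) (MB b b' s))"
    unfolding eq by (simp add: TT_assoc[OF tn])
  also have "\<dots> \<le> TT T (TT T (MA a (x i) (max t s)) (1 - \<delta>)) (MB (y i) b' (max t s))"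
    by (intro TT_mono[OF tn] order_refl naB moA) (use a b xi yi ts in auto)
  also have "\<dots> \<le> crx a b' (max t s)" by (rule crx_ge) (use t i in auto)
  finally show ?thesis .
qed

lemma TT_cc: "w \<in> {0..1} \<Longrightarrow> TT T (1 - \<delta>) (TT T (1 - \<delta>) w) \<le> T w (1 - \<delta>)"
proof -
  assume w: "w \<in> {0..1}"
  have "TT T (1 - \<delta>) (TT T (1 - \<delta>) w) = TT T (TT T (1 - \<delta>) (1 - \<delta>)) w" by (simp add: TT_assoc[OF tn])
  also have "\<dots> \<le> TT T (1 - \<delta>) w" by (intro TT_mono[OF tn] TT_le1[OF tn c01] order_refl)
  also have "\<dots> = T w (1 - \<delta>)" using TT_comm[OF tn] TT_eq[OF tn w c01] by metis
  finally show ?thesis .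
qed

lemma case_ABA:
  assumes a: "a \<in> A" "a' \<in> A" and b: "b \<in> B" and ts: "0 < t" "0 < s"
  shows "TT T (crx a b t) (crx a' b s) \<le> MA a a' (max t s)"
proof (cases "crx a b t = 0 \<or> crx a' b s = 0")
  case True then show ?thesis using rA[OF a, of "max t s"] ts
    by (auto simp: TT_zero_left[OF tn] TT_zero[OF tn])
next
  case False
  then obtain i j where t: "\<tau> < t" and i: "i \<in> {1..N}" and s: "\<tau> < s" and j: "j \<in> {1..N}"
    and eq1: "crx a b t = TT T (TT T (MA a (x i) t) (1 - \<delta>)) (MB (y i) b t)"
    and eq2: "crx a' b s = TT T (TT T (MA a' (x j) s) (1 - \<delta>)) (MB (y j) b s)"
    using crx_cases by meson
  have xi: "x i \<in> A" "x j \<in> A" and yi: "y i \<in> B" "y j \<in> B" using i j xin yin by auto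
  let ?u = "max t s"
  let ?c = "1 - \<delta>"
  have "TT T (crx a b t) (crx a' b s) =
     TT T (MA a (x i) t) (TT T (TT T ?c (TT T ?c (TT T (MB (y i) b t) (MB b (y j) s)))) (MA (x j) a' s))"
  proof -
    have eq2': "crx a' b s = TT T (TT T (MA (x j) a' s) ?c) (MB b (y j) s)"
      using eq2 syA[OF a(2) xi(2) ts(2)] syB[OF yi(2) b ts(2)] by simp
    show ?thesis unfolding eq1 eq2' by (rule TT_rearr[OF tn])
  qed
  also have "\<dots> \<le> TT T (MA a (x i) ?u) (TT T (TT T ?c (TT T ?c (MB (y i) (y j) ?u))) (MA (x j) a' ?u))"
    by (rule TT_mono[OF tn, OF moA[OF a(1) xi(1) ts(1) max.cobounded1]
       TT_mono[OF tn, OF TT_mono[OF tn, OF order_refl TT_mono[OF tn, OF order_refl naB[OF yi(1) b yi(2) ts]]]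
         moA[OF xi(2) a(2) ts(2) max.cobounded2]]])
  also have "\<dots> \<le> TT T (MA a (x i) ?u) (TT T (MA (x i) (x j) ?u) (MA (x j) a' ?u))"
  proof -
    have u: "\<tau> < ?u" using t by auto
    have "TT T ?c (TT T ?c (MB (y i) (y j) ?u)) \<le> T (MB (y i) (y j) ?u) ?c"
      by (rule TT_cc) (rule rB[OF yi]; use ts in auto)
    also have "\<dots> \<le> MA (x i) (x j) ?u" using closeAB u i j by blast
    finally have W: "TT T ?c (TT T ?c (MB (y i) (y j) ?u)) \<le> MA (x i) (x j) ?u" .
    show ?thesis by (rule TT_mono[OF tn, OF order_refl TT_mono[OF tn, OF W order_refl]])
  qed
  also have "\<dots> \<le> TT T (MA a (x i) ?u) (MA (x i) a' ?u)"
    using naA[OF xi(1,2) a(2), of ?u ?u] ts by (intro TT_mono[OF tn, OF order_refl]) auto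
  also have "\<dots> \<le> MA a a' ?u"
    using naA[OF a(1) xi(1) a(2), of ?u ?u] ts by auto
  finally show ?thesis .
qed

lemma case_BAB:
  assumes a: "a \<in> A" and b: "b \<in> B" "b' \<in> B" and ts: "0 < t" "0 < s"
  shows "TT T (crx a b t) (crx a b' s) \<le> MB b b' (max t s)"
proof (cases "crx a b t = 0 \<or> crx a b' s = 0")
  case True then show ?thesis using rB[OF b, of "max t s"] ts
    by (auto simp: TT_zero_left[OF tn] TT_zero[OF tn])
next
  case False
  then obtain i j where t: "\<tau> < t" and i: "i \<in> {1..N}" and s: "\<tau> < s" and j: "j \<in> {1..N}"
    and eq1: "crx a b t = TT T (TT T (MA a (x i) t) (1 - \<delta>)) (MB (y i) b t)"
    and eq2: "crx a b' s = TT T (TT T (MA a (x j) s) (1 - \<delta>)) (MB (y j) b' s)"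
    using crx_cases by meson
  have xi: "x i \<in> A" "x j \<in> A" and yi: "y i \<in> B" "y j \<in> B" using i j xin yin by auto
  let ?u = "max t s"
  let ?c = "1 - \<delta>"
  have "TT T (crx a b t) (crx a b' s) =
     TT T (MB b (y i) t) (TT T (TT T ?c (TT T ?c (TT T (MA (x i) a t) (MA a (x j) s)))) (MB (y j) b' s))"
  proof -
    have eq1': "crx a b t = TT T (TT T (MA (x i) a t) ?c) (MB b (y i) t)"
      using eq1 syA[OF a xi(1) ts(1)] syB[OF yi(1) b(1) ts(1)] by simp
    show ?thesis unfolding eq1' eq2 by (rule TT_rearr2[OF tn])
  qed
  also have "\<dots> \<le> TT T (MB b (y i) ?u) (TT T (TT T ?c (TT T ?c (MA (x i) (x j) ?u))) (MB (y j) b' ?u))"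
    by (rule TT_mono[OF tn, OF moB[OF b(1) yi(1) ts(1) max.cobounded1]
       TT_mono[OF tn, OF TT_mono[OF tn, OF order_refl TT_mono[OF tn, OF order_refl naA[OF xi(1) a xi(2) ts]]]
         moB[OF yi(2) b(2) ts(2) max.cobounded2]]])
  also have "\<dots> \<le> TT T (MB b (y i) ?u) (TT T (MB (y i) (y j) ?u) (MB (y j) b' ?u))"
  proof -
    have u: "\<tau> < ?u" using t by auto
    have "TT T ?c (TT T ?c (MA (x i) (x j) ?u)) \<le> T (MA (x i) (x j) ?u) ?c"
      by (rule TT_cc) (rule rA[OF xi]; use ts in auto)
    also have "\<dots> \<le> MB (y i) (y j) ?u" using closeBA u i j by blast
    finally have W: "TT T ?c (TT T ?c (MA (x i) (x j) ?u)) \<le> MB (y i) (y j) ?u" .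
    show ?thesis by (rule TT_mono[OF tn, OF order_refl TT_mono[OF tn, OF W order_refl]])
  qed
  also have "\<dots> \<le> TT T (MB b (y i) ?u) (MB (y i) b' ?u)"
    using naB[OF yi(1,2) b(2), of ?u ?u] ts by (intro TT_mono[OF tn, OF order_refl]) auto
  also have "\<dots> \<le> MB b b' ?u"
    using naB[OF b(1) yi(1) b(2), of ?u ?u] ts by auto
  finally show ?thesis .
qed


lemma glue_fun: "glue (Inl a) (Inl a') = MA a a'" "glue (Inr b) (Inr b') = MB b b'"
  "glue (Inl a) (Inr b) = crx a b" "glue (Inr b) (Inl a) = crx a b"
  by (auto simp: glue_def fun_eq_iff)

lemma glue_range: "p \<in> Inl ` A \<union> Inr ` B \<Longrightarrow> q \<in> Inl ` A \<union> Inr ` B \<Longrightarrow> 0 \<le> t \<Longrightarrow> glue p q t \<in> {0..1}"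
  by (elim UnE imageE) (simp_all only: glue_fun crx_range rA rB)

lemma glue_na:
  assumes p: "p \<in> Inl ` A \<union> Inr ` B" and q: "q \<in> Inl ` A \<union> Inr ` B" and r: "r \<in> Inl ` A \<union> Inr ` B"
    and ts: "0 < t" "0 < s"
  shows "T (glue p q t) (glue q r s) \<le> glue p r (max t s)"
proof -
  have "T (glue p q t) (glue q r s) = TT T (glue p q t) (glue q r s)"
    using glue_range p q r ts by (simp add: TT_eq[OF tn])
  also have "\<dots> \<le> glue p r (max t s)"
  proof -
    { fix a a' a'' assume "a \<in> A" "a' \<in> A" "a'' \<in> A"
      then have "TT T (MA a a' t) (MA a' a'' s) \<le> MA a a'' (max t s)" using naA ts by blast }
    note c1 = this
    { fix b b' b'' assume "b \<in> B" "b' \<in> B" "b'' \<in> B"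
      then have "TT T (MB b b' t) (MB b' b'' s) \<le> MB b b'' (max t s)" using naB ts by blast }
    note c8 = this
    { fix a a' b assume ab: "a \<in> A" "a' \<in> A" "b \<in> B"
      have "TT T (crx a b t) (MA a a' s) = TT T (MA a' a s) (crx a b t)"
        using TT_comm[OF tn] syA ab ts by metis
      also have "\<dots> \<le> crx a' b (max s t)" using case_AAB ab ts by blast
      finally have "TT T (crx a b t) (MA a a' s) \<le> crx a' b (max t s)" by (simp add: max.commute) }
    note c5 = this
    { fix a b b' assume ab: "a \<in> A" "b \<in> B" "b' \<in> B"
      have "TT T (MB b b' t) (crx a b' s) = TT T (crx a b' s) (MB b' b t)"
        using TT_comm[OF tn] syB ab ts by metis
      also have "\<dots> \<le> crx a b (max s t)" using case_ABB ab ts by blast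
      finally have "TT T (MB b b' t) (crx a b' s) \<le> crx a b (max t s)" by (simp add: max.commute) }
    note c7 = this
    note c2 = case_AAB[OF _ _ _ ts] and c3 = case_ABB[OF _ _ _ ts]
      and c4 = case_ABA[OF _ _ _ ts] and c6 = case_BAB[OF _ _ _ ts]
    show ?thesis using p q r
      by (elim UnE imageE; simp only: glue_fun sum.case c1 c2 c3 c4 c5 c6 c7 c8)
  qed
  finally show ?thesis .
qed

lemma crx_lc: assumes "0 < t" "a \<in> A" "b \<in> B" shows "(crx a b \<longlongrightarrow> crx a b t) (at_left t)"
proof (cases "t \<le> \<tau>")
  case True
  have "eventually (\<lambda>s. s \<in> {0<..<t}) (at_left t)" using eventually_at_left_real assms by blast
  then have ev: "eventually (\<lambda>s. 0 = crx a b s) (at_left t)"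
    by eventually_elim (use True in \<open>auto simp: crx_def\<close>)
  have "crx a b t = 0" using True by (simp add: crx_def)
  then have l0: "((\<lambda>s. 0) \<longlongrightarrow> crx a b t) (at_left t)" by simp
  show ?thesis by (rule Lim_transform_eventually[OF l0 ev])
next
  case False
  let ?F = "\<lambda>s. gmax (\<lambda>i. TT T (TT T (MA a (x i) s) (1 - \<delta>)) (MB (y i) b s)) N"
  have lim: "(?F \<longlongrightarrow> ?F t) (at_left t)"
  proof (rule tendsto_gmax)
    fix i assume i: "i \<in> {1..N}"
    have l1: "(MA a (x i) \<longlongrightarrow> MA a (x i) t) (at_left t)" using fm_lc[OF tn fA] assms i xin by blast
    have l2: "(MB (y i) b \<longlongrightarrow> MB (y i) b t) (at_left t)" using fm_lc[OF tn fB] assms i yin by blast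
    show "((\<lambda>s. TT T (TT T (MA a (x i) s) (1 - \<delta>)) (MB (y i) b s)) \<longlongrightarrow>
       TT T (TT T (MA a (x i) t) (1 - \<delta>)) (MB (y i) b t)) (at_left t)"
      by (intro tendsto_TT[OF tn] l1 l2 tendsto_const)
  qed
  have "eventually (\<lambda>s. s \<in> {\<tau><..<t}) (at_left t)" using eventually_at_left_real False by simp
  then have ev: "eventually (\<lambda>s. ?F s = crx a b s) (at_left t)"
    by eventually_elim (auto simp: crx_def)
  have "crx a b t = ?F t" using False by (simp add: crx_def)
  then show ?thesis using Lim_transform_eventually[OF lim ev] by simp
qed

lemma glue_nafm: "na_fuzzy_metric (Inl ` A \<union> Inr ` B) glue T"
proof (rule mk_na_fm[OF tn])
  let ?U = "Inl ` A \<union> Inr ` B"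
  show "\<forall>p\<in>?U. \<forall>q\<in>?U. \<forall>t\<ge>0. 0 \<le> glue p q t \<and> glue p q t \<le> 1"
    using glue_range by auto
  show "\<forall>p\<in>?U. \<forall>q\<in>?U. glue p q 0 = 0"
    using fA fB tau unfolding na_fuzzy_metric_def fuzzy_metric_def by (auto simp: glue_def crx_def)
  have eA: "\<forall>x\<in>A. \<forall>y\<in>A. (\<forall>t>0. MA x y t = 1) \<longleftrightarrow> x = y"
    using fA unfolding na_fuzzy_metric_def fuzzy_metric_def by blast
  have eB: "\<forall>x\<in>B. \<forall>y\<in>B. (\<forall>t>0. MB x y t = 1) \<longleftrightarrow> x = y"
    using fB unfolding na_fuzzy_metric_def fuzzy_metric_def by blast
  have c0: "\<not> (\<forall>t>0. crx a b t = 1)" for a b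
  proof
    assume "\<forall>t>0. crx a b t = 1"
    then have "crx a b \<tau> = 1" using tau by blast
    then show False by (simp add: crx_def)
  qed
  show "\<forall>p\<in>?U. \<forall>q\<in>?U. (\<forall>t>0. glue p q t = 1) \<longleftrightarrow> p = q"
  proof (intro ballI)
    fix p q assume p: "p \<in> ?U" and q: "q \<in> ?U"
    show "(\<forall>t>0. glue p q t = 1) \<longleftrightarrow> p = q"
      using p q
    proof (elim UnE imageE)
      fix a a' assume "p = Inl a" "a \<in> A" "q = Inl a'" "a' \<in> A"
      then show ?thesis using eA by (simp add: glue_def)
    next
      fix a b assume "p = Inl a" "a \<in> A" "q = Inr b" "b \<in> B"
      then show ?thesis using c0 by (simp add: glue_def)
    next
      fix a b assume "p = Inr b" "b \<in> B" "q = Inl a" "a \<in> A"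
      then show ?thesis using c0 by (simp add: glue_def)
    next
      fix b b' assume "p = Inr b" "b \<in> B" "q = Inr b'" "b' \<in> B"
      then show ?thesis using eB by (simp add: glue_def)
    qed
  qed
  show "\<forall>p\<in>?U. \<forall>q\<in>?U. \<forall>t>0. glue p q t = glue q p t"
  proof (intro ballI allI impI)
    fix p q and t :: real assume p: "p \<in> ?U" and q: "q \<in> ?U" and t: "0 < t"
    show "glue p q t = glue q p t" using p q
      by (elim UnE imageE) (simp_all add: glue_fun syA syB t)
  qed
  show "\<forall>p\<in>?U. \<forall>q\<in>?U. \<forall>r\<in>?U. \<forall>t>0. \<forall>s>0. glue p r (max t s) \<ge> T (glue p q t) (glue q r s)"
    using glue_na by blast
  have lcA: "\<forall>x\<in>A. \<forall>y\<in>A. \<forall>t>0. (MA x y \<longlongrightarrow> MA x y t) (at_left t)"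
    using fA unfolding na_fuzzy_metric_def fuzzy_metric_def by blast
  have lcB: "\<forall>x\<in>B. \<forall>y\<in>B. \<forall>t>0. (MB x y \<longlongrightarrow> MB x y t) (at_left t)"
    using fB unfolding na_fuzzy_metric_def fuzzy_metric_def by blast
  show "\<forall>p\<in>?U. \<forall>q\<in>?U. \<forall>t>0. (glue p q \<longlongrightarrow> glue p q t) (at_left t)"
  proof (intro ballI allI impI)
    fix p q and t :: real assume p: "p \<in> ?U" and q: "q \<in> ?U" and t: "0 < t"
    show "(glue p q \<longlongrightarrow> glue p q t) (at_left t)"
      using p q
    proof (elim UnE imageE)
      fix a a' assume "p = Inl a" "a \<in> A" "q = Inl a'" "a' \<in> A"
      then show ?thesis using lcA t by (simp add: glue_fun)
    next
      fix a b assume "p = Inl a" "a \<in> A" "q = Inr b" "b \<in> B"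
      then show ?thesis using crx_lc t by (simp add: glue_fun)
    next
      fix a b assume "p = Inr b" "b \<in> B" "q = Inl a" "a \<in> A"
      then show ?thesis using crx_lc t by (simp add: glue_fun)
    next
      fix b b' assume "p = Inr b" "b \<in> B" "q = Inr b'" "b' \<in> B"
      then show ?thesis using lcB t by (simp add: glue_fun)
    qed
  qed
qed

lemma glue_adm: "admissible A MA B MB T glue"
  unfolding admissible_def using glue_nafm by (simp add: glue_def)

lemma glue_MGH:
  assumes Ane: "A \<noteq> {}" and Bne: "B \<noteq> {}"
    and netA: "\<forall>a\<in>A. \<exists>i\<in>{1..N}. MA a (x i) \<tau> > 1 - \<delta>"
    and netB: "\<forall>b\<in>B. \<exists>i\<in>{1..N}. MB b (y i) \<tau> > 1 - \<delta>"
    and t: "\<tau> < t"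
  shows "T (1 - \<delta>) (1 - \<delta>) \<le> M_GH T A MA B MB t"
proof -
  let ?c = "1 - \<delta>"
  let ?w = "T ?c ?c"
  have t0: "0 < t" using t tau by auto
  have wTT: "?w = TT T ?c ?c" using TT_eq[OF tn c01 c01] by simp
  have rng: "\<forall>p\<in>Inl ` A. \<forall>q\<in>Inr ` B. 0 \<le> glue p q t \<and> glue p q t \<le> 1"
    using glue_range t0 by auto
  have H: "?w \<le> H_M glue (Inl ` A) (Inr ` B) t"
  proof (rule H_M_ge)
    show "Inl ` A \<noteq> {}" "Inr ` B \<noteq> {}" using Ane Bne by auto
    show "\<forall>p\<in>Inl ` A. \<forall>q\<in>Inr ` B. 0 \<le> glue p q t \<and> glue p q t \<le> 1" by (rule rng)
    show "\<forall>p\<in>Inl ` A. \<exists>q\<in>Inr ` B. ?w \<le> glue p q t"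
    proof
      fix p :: "'a + 'a" assume "p \<in> Inl ` A"
      then obtain a where a: "a \<in> A" "p = Inl a" by auto
      then obtain i where i: "i \<in> {1..N}" "MA a (x i) \<tau> > ?c" using netA by blast
      have xi: "x i \<in> A" and yi: "y i \<in> B" using i xin yin by auto
      have "?c \<le> MA a (x i) t" using i(2) moA[OF a(1) xi tau less_imp_le[OF t]] by linarith
      then have "?w \<le> TT T (MA a (x i) t) ?c" unfolding wTT by (intro TT_mono[OF tn] order_refl)
      also have "\<dots> = TT T (TT T (MA a (x i) t) ?c) (MB (y i) (y i) t)"
        using fm_refl[OF tn fB yi t0] TT_one[OF tn TT_range[OF tn]] by simp
      also have "\<dots> \<le> crx a (y i) t" by (rule crx_ge[OF t i(1)])
      finally have "?w \<le> crx a (y i) t" .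
      then have "?w \<le> glue p (Inr (y i)) t" using a by (simp add: glue_fun)
      then show "\<exists>q\<in>Inr ` B. ?w \<le> glue p q t" using yi by blast
    qed
    show "\<forall>q\<in>Inr ` B. \<exists>p\<in>Inl ` A. ?w \<le> glue p q t"
    proof
      fix q :: "'a + 'a" assume "q \<in> Inr ` B"
      then obtain b where b: "b \<in> B" "q = Inr b" by auto
      then obtain i where i: "i \<in> {1..N}" "MB b (y i) \<tau> > ?c" using netB by blast
      have xi: "x i \<in> A" and yi: "y i \<in> B" using i xin yin by auto
      have "?c \<le> MB b (y i) t" using i(2) moB[OF b(1) yi tau less_imp_le[OF t]] by linarith
      then have "?c \<le> MB (y i) b t" using syB[OF b(1) yi t0] by simp
      then have "?w \<le> TT T ?c (MB (y i) b t)" unfolding wTT by (intro TT_mono[OF tn] order_refl)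
      also have "\<dots> = TT T (TT T (MA (x i) (x i) t) ?c) (MB (y i) b t)"
        using fm_refl[OF tn fA xi t0] TT_one_left[OF tn c01] by simp
      also have "\<dots> \<le> crx (x i) b t" by (rule crx_ge[OF t i(1)])
      finally have "?w \<le> crx (x i) b t" .
      then have "?w \<le> glue (Inl (x i)) q t" using b by (simp add: glue_fun)
      then show "\<exists>p\<in>Inl ` A. ?w \<le> glue p q t" using xi by blast
    qed
  qed
  have bdd: "bdd_above {H_M Mu (Inl ` A) (Inr ` B) t | Mu. admissible A MA B MB T Mu}"
  proof (rule bdd_aboveI[of _ 1])
    fix h assume "h \<in> {H_M Mu (Inl ` A) (Inr ` B) t | Mu. admissible A MA B MB T Mu}"
    then obtain Mu where h: "h = H_M Mu (Inl ` A) (Inr ` B) t" and adm: "admissible A MA B MB T Mu" by blast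
    have "na_fuzzy_metric (Inl ` A \<union> Inr ` B) Mu T" using adm unfolding admissible_def by blast
    then have "\<forall>p\<in>Inl ` A. \<forall>q\<in>Inr ` B. 0 \<le> Mu p q t \<and> Mu p q t \<le> 1"
      using t0 unfolding na_fuzzy_metric_def fuzzy_metric_def by auto
    then show "h \<le> 1" unfolding h by (rule H_M_le1[rotated 2]) (use Ane Bne in auto)
  qed
  have "H_M glue (Inl ` A) (Inr ` B) t \<le> M_GH T A MA B MB t"
    unfolding M_GH_def by (rule cSup_upper[OF _ bdd]) (use glue_adm in blast)
  then show ?thesis using H by linarith
qed

end


lemma subseq_conv:
  fixes v :: "nat \<Rightarrow> 'i::countable \<Rightarrow> real"
  assumes "\<And>n i. v n i \<in> {0..1}"
  shows "\<exists>r l. strict_mono r \<and> (\<forall>i. (\<lambda>n. v (r n) i) \<longlonglongrightarrow> l i)"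
proof -
  let ?S = "PiE UNIV (\<lambda>_::'i. {0..1::real})"
  have "compactin (product_topology (\<lambda>_. euclidean) UNIV) ?S"
    by (simp add: compactin_PiE)
  then have "compact ?S" by (simp add: euclidean_product_topology)
  then have sc: "seq_compact ?S" by (rule compact_imp_seq_compact)
  have vS: "\<forall>n. v n \<in> ?S" using assms by (auto simp: PiE_iff)
  obtain l r where lr0: "l \<in> ?S" and lr: "strict_mono r" "(v \<circ> r) \<longlonglongrightarrow> l"
    by (rule seq_compactE[OF sc vS])
  have "(\<lambda>n. v (r n) i) \<longlonglongrightarrow> l i" for i
  proof -
    have c: "continuous_on UNIV (\<lambda>f::'i \<Rightarrow> real. f i)" by (rule continuous_on_product_coordinates)
    have "isCont (\<lambda>f::'i \<Rightarrow> real. f i) l"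
      using c unfolding continuous_on_eq_continuous_at[OF open_UNIV] by simp
    from isCont_tendsto_compose[OF this lr(2)] show ?thesis by (simp add: o_def)
  qed
  then show ?thesis using lr(1) by blast
qed

lemma ratio_prop:
  assumes tn: "cont_tnorm T" and r: "\<alpha> \<in> {0..1}" "\<beta> \<in> {0..1}" "\<alpha>0 \<in> {0..1}" "\<beta>0 \<in> {0..1}"
    and d: "0 < \<delta>" "\<delta> < 1" and c0: "T \<beta>0 (1 - \<delta>) \<le> \<alpha>0" and p0: "0 < T \<beta>0 (1 - \<delta>)"
    and rat: "\<alpha> < \<beta> \<longrightarrow> \<alpha> / T \<beta> (1 - \<delta>) \<ge> \<alpha>0 / T \<beta>0 (1 - \<delta>)"
  shows "T \<beta> (1 - \<delta>) \<le> \<alpha>"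
proof (cases "\<alpha> < \<beta>")
  case False
  have "T \<beta> (1 - \<delta>) \<le> \<beta>" using T_le1[OF tn r(2)] d by auto
  then show ?thesis using False by linarith
next
  case True
  have c: "1 - \<delta> \<in> {0..1}" using d by auto
  have "1 \<le> \<alpha>0 / T \<beta>0 (1 - \<delta>)" using c0 p0 by simp
  also have "\<dots> \<le> \<alpha> / T \<beta> (1 - \<delta>)" using rat True by blast
  finally have q: "1 \<le> \<alpha> / T \<beta> (1 - \<delta>)" .
  have nn: "0 \<le> T \<beta> (1 - \<delta>)" using T_range[OF tn r(2) c] by auto
  show ?thesis
  proof (cases "T \<beta> (1 - \<delta>) = 0")
    case True then show ?thesis using r by simp
  next
    case False
    then have "0 < T \<beta> (1 - \<delta>)" using nn by auto
    then show ?thesis using q by (simp add: le_divide_eq)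
  qed
qed

lemma exists_small_e:
  assumes tn: "cont_tnorm T" and c: "0 < c" "c \<le> 1" and m: "0 < m" "m < 1"
  shows "\<exists>e'. 0 < e' \<and> e' < 1 \<and> e' \<le> m \<and> 0 < T c (1 - e')"
proof -
  have cc: "continuous_on UNIV (\<lambda>z. TT T c z)"
    by (rule TT_cont1[OF tn]) (intro continuous_intros)+
  have "isCont (\<lambda>z. TT T c z) 1"
    using cc unfolding continuous_on_eq_continuous_at[OF open_UNIV] by simp
  then obtain d where d: "d > 0" "\<forall>z. dist z 1 < d \<longrightarrow> dist (TT T c z) (TT T c 1) < c"
    unfolding continuous_at_eps_delta using c by blast
  define e' where "e' = min (d/2) m"
  have e': "0 < e'" "e' < 1" "e' \<le> m" "e' < d" using d m by (auto simp: e'_def)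
  have "dist (1 - e') 1 < d" using e' by (simp add: dist_real_def)
  then have "dist (TT T c (1 - e')) c < c" using d(2) TT_one[OF tn, of c] c by auto
  then have "0 < TT T c (1 - e')" by (simp add: dist_real_def abs_less_iff)
  then show ?thesis using e' TT_eq[OF tn, of c "1 - e'"] c by auto
qed

lemma exists_k:
  assumes tn: "cont_tnorm T" and e: "0 < e" and t: "0 < t"
  shows "\<exists>d>0. \<forall>z. \<bar>z - 1\<bar> < d \<longrightarrow> TT T z z > 1 - e"
proof -
  have cc: "continuous_on UNIV (\<lambda>z. TT T z z)"
    by (rule TT_cont1[OF tn]) (intro continuous_intros)+
  have "isCont (\<lambda>z. TT T z z) 1"
    using cc unfolding continuous_on_eq_continuous_at[OF open_UNIV] by simp
  then obtain d where d: "d > 0" "\<forall>z. dist z 1 < d \<longrightarrow> dist (TT T z z) (TT T 1 1) < e"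
    unfolding continuous_at_eps_delta using e by blast
  have one: "TT T 1 1 = 1" using TT_one[OF tn, of 1] by simp
  show ?thesis
  proof (intro exI conjI allI impI)
    show "d > 0" by (rule d(1))
    fix z :: real assume "\<bar>z - 1\<bar> < d"
    then have "dist (TT T z z) (TT T 1 1) < e" using d(2) by (simp add: dist_real_def)
    then show "TT T z z > 1 - e" using one by (simp add: dist_real_def abs_less_iff)
  qed
qed

theorem mainTheorem7:
  fixes T :: "real \<Rightarrow> real \<Rightarrow> real"
    and X :: "nat \<Rightarrow> 'a set"
    and M :: "nat \<Rightarrow> 'a \<Rightarrow> 'a \<Rightarrow> real \<Rightarrow> real"
  assumes tnorm: "cont_tnorm T"
    and spaces: "\<And>n. na_fuzzy_metric (X n) (M n) T"
    and nonempty: "\<And>n. X n \<noteq> {}"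
    and compact: "\<And>n. fcompact (X n) (M n) (X n)"
    and tn1: "TN1 T"
    and diam: "\<exists>C :: real \<Rightarrow> real.
        (\<forall>s>0. \<forall>s'>0. s \<le> s' \<longrightarrow> C s \<le> C s') \<and>
        (\<forall>s>0. (C \<longlongrightarrow> C s) (at_left s)) \<and>
        (\<forall>s>0. 0 < C s \<and> C s \<le> 1) \<and>
        (\<forall>s>0. \<forall>n. C s \<le> fdiam (X n) (M n) s)"
    and cov_net: "\<exists>N :: real \<Rightarrow> real \<Rightarrow> nat.
        (\<forall>t>0. \<forall>e. 0 < e \<and> e < 1 \<longrightarrow> (\<forall>n. Cov (X n) (M n) e t \<le> N e t)) \<and>
        (\<forall>t>0. \<forall>e. 0 < e \<and> e < 1 \<longrightarrow>
          (\<exists>x :: nat \<Rightarrow> nat \<Rightarrow> 'a.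
             (\<forall>n. fnet (X n) (M n) t e (N e t) (x n)) \<and>
             (\<forall>n m s i j. s > t \<longrightarrow> i \<in> {1..N e t} \<longrightarrow> j \<in> {1..N e t} \<longrightarrow>
                M n (x n i) (x n j) s < M m (x m i) (x m j) s \<longrightarrow>
                M n (x n i) (x n j) s / T (M m (x m i) (x m j) s) (1 - e)
                  \<ge> M n (x n i) (x n j) t / T (M m (x m i) (x m j) t) (1 - e))))"
  shows "\<exists>r :: nat \<Rightarrow> nat. strict_mono r \<and>
           (\<forall>t>0. \<forall>e. 0 < e \<and> e < 1 \<longrightarrow>
              (\<exists>n0. \<forall>n\<ge>n0. \<forall>m\<ge>n0.
                 M_GH T (X (r n)) (M (r n)) (X (r m)) (M (r m)) t > 1 - e))"
proof -
  obtain C :: "real \<Rightarrow> real" where Cpos: "\<forall>s>0. 0 < C s \<and> C s \<le> 1"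
    and Cd: "\<forall>s>0. \<forall>n. C s \<le> fdiam (X n) (M n) s"
    using diam by blast
  obtain N :: "real \<Rightarrow> real \<Rightarrow> nat" where Nnet: "\<forall>t>0. \<forall>e. 0 < e \<and> e < 1 \<longrightarrow>
          (\<exists>x :: nat \<Rightarrow> nat \<Rightarrow> 'a.
             (\<forall>n. fnet (X n) (M n) t e (N e t) (x n)) \<and>
             (\<forall>n m s i j. s > t \<longrightarrow> i \<in> {1..N e t} \<longrightarrow> j \<in> {1..N e t} \<longrightarrow>
                M n (x n i) (x n j) s < M m (x m i) (x m j) s \<longrightarrow>
                M n (x n i) (x n j) s / T (M m (x m i) (x m j) s) (1 - e)
                  \<ge> M n (x n i) (x n j) t / T (M m (x m i) (x m j) t) (1 - e)))"
    using cov_net by blast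
  have rng: "M n a b s \<in> {0..1}" if "a \<in> X n" "b \<in> X n" "0 \<le> s" for n a b s
    using fm_range[OF tnorm spaces that] .
  have Mge: "C s \<le> M n a b s" if "a \<in> X n" "b \<in> X n" "0 < s" for n a b s
  proof -
    have "C s \<le> fdiam (X n) (M n) s" using Cd that by blast
    also have "\<dots> \<le> M n a b s" unfolding fdiam_def
    proof (rule cInf_lower)
      show "M n a b s \<in> {M n x y s |x y. x \<in> X n \<and> y \<in> X n}" using that by blast
      show "bdd_below {M n x y s |x y. x \<in> X n \<and> y \<in> X n}"
        using rng that(3) by (intro bdd_belowI[of _ 0]) (auto simp: less_imp_le)
    qed
    finally show ?thesis .
  qed
  define tk where "tk k = 1 / (real k + 2)" for k :: nat
  have tk: "0 < tk k" "tk k < 1" for k unfolding tk_def by auto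
  have exe: "\<exists>e'. 0 < e' \<and> e' < 1 \<and> e' \<le> tk k \<and> 0 < T (C (tk k)) (1 - e')" for k
  proof -
    have "0 < C (tk k)" "C (tk k) \<le> 1" using Cpos tk[of k] by auto
    from exists_small_e[OF tnorm this tk(1)[of k] tk(2)[of k]] show ?thesis .
  qed
  define ek where "ek k = (SOME e'. 0 < e' \<and> e' < 1 \<and> e' \<le> tk k \<and> 0 < T (C (tk k)) (1 - e'))" for k
  have ek: "0 < ek k" "ek k < 1" "ek k \<le> tk k" "0 < T (C (tk k)) (1 - ek k)" for k
    using someI_ex[OF exe[of k]] unfolding ek_def by auto
  define Nk where "Nk k = N (ek k) (tk k)" for k
  define P where "P k x \<longleftrightarrow> (\<forall>n. fnet (X n) (M n) (tk k) (ek k) (Nk k) (x n)) \<and>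
             (\<forall>n m s i j. s > tk k \<longrightarrow> i \<in> {1..Nk k} \<longrightarrow> j \<in> {1..Nk k} \<longrightarrow>
                M n (x n i) (x n j) s < M m (x m i) (x m j) s \<longrightarrow>
                M n (x n i) (x n j) s / T (M m (x m i) (x m j) s) (1 - ek k)
                  \<ge> M n (x n i) (x n j) (tk k) / T (M m (x m i) (x m j) (tk k)) (1 - ek k))" for k x
  have exx: "\<exists>x. P k x" for k
  proof -
    have h1: "tk k > 0" using tk by auto
    have h2: "0 < ek k \<and> ek k < 1" using ek by auto
    from Nnet[rule_format, OF h1 h2] show ?thesis unfolding P_def Nk_def .
  qed
  define xk where "xk k = (SOME x. P k x)" for k
  have xk: "P k (xk k)" for k unfolding xk_def using someI_ex[OF exx] .
  have xkin: "xk k n i \<in> X n" if "i \<in> {1..Nk k}" for k n i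
  proof -
    have "fnet (X n) (M n) (tk k) (ek k) (Nk k) (xk k n)" using xk[of k] unfolding P_def by blast
    then show ?thesis using that unfolding fnet_def by blast
  qed
  define v where "v n = (\<lambda>(k, i, j). if i \<in> {1..Nk k} \<and> j \<in> {1..Nk k}
      then M n (xk k n i) (xk k n j) (tk k) else 0)" for n
  have v01: "v n q \<in> {0..1}" for n q
  proof -
    obtain k i j where q: "q = (k, i, j)" by (cases q) auto
    show ?thesis
    proof (cases "i \<in> {1..Nk k} \<and> j \<in> {1..Nk k}")
      case True
      then have h1: "xk k n i \<in> X n" and h2: "xk k n j \<in> X n" using xkin by auto
      have "M n (xk k n i) (xk k n j) (tk k) \<in> {0..1}"
        using rng[OF h1 h2, of "tk k"] tk(1)[of k] by simp
      then show ?thesis using True unfolding v_def q by simp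
    next
      case False
      then show ?thesis unfolding v_def q by auto
    qed
  qed
  obtain r l where r: "strict_mono r" and lim: "\<And>q. (\<lambda>n. v (r n) q) \<longlonglongrightarrow> l q"
    using subseq_conv[of v, OF v01] by blast
  show ?thesis
  proof (intro exI[of _ r] conjI allI impI)
    show "strict_mono r" by (rule r)
    fix t e :: real assume t: "0 < t" and e: "0 < e \<and> e < 1"
    obtain d where d: "d > 0" "\<forall>z. \<bar>z - 1\<bar> < d \<longrightarrow> TT T z z > 1 - e"
      using exists_k[OF tnorm conjunct1[OF e] t] by blast
    have md: "0 < min d t" using d(1) t by simp
    obtain k0 where k0: "inverse (real (Suc k0)) < min d t"
      using reals_Archimedean[OF md] by blast
    define k where "k = k0"
    have tkk: "tk k < min d t"
    proof -
      have h1: "real (Suc k0) \<le> real k0 + 2" by simp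
      have h2: "0 < real (Suc k0)" by simp
      have "inverse (real k0 + 2) \<le> inverse (real (Suc k0))" by (rule le_imp_inverse_le[OF h1 h2])
      then have "tk k \<le> inverse (real (Suc k0))" unfolding tk_def k_def by (simp add: inverse_eq_divide)
      then show ?thesis using k0 by linarith
    qed
    let ?\<tau> = "tk k" and ?\<delta> = "ek k" and ?N = "Nk k"
    have goodT: "1 - e < T (1 - ?\<delta>) (1 - ?\<delta>)"
    proof -
      have "\<bar>(1 - ?\<delta>) - 1\<bar> < d" using ek(1,3)[of k] tkk by simp
      then have "1 - e < TT T (1 - ?\<delta>) (1 - ?\<delta>)" using d by blast
      moreover have "1 - ?\<delta> \<in> {0..1}" using ek(1,2)[of k] by simp
      ultimately show ?thesis using TT_eq[OF tnorm, of "1 - ?\<delta>" "1 - ?\<delta>"] by simp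
    qed
    let ?w = "\<lambda>n i j. M n (xk k n i) (xk k n j) ?\<tau>"
    have vw: "v n (k, i, j) = ?w n i j" if "i \<in> {1..?N}" "j \<in> {1..?N}" for n i j
      using that unfolding v_def by simp
    have pw: "\<exists>n0. \<forall>n\<ge>n0. \<forall>m\<ge>n0. TT T (?w (r m) i j) (1 - ?\<delta>) \<le> ?w (r n) i j"
      if ij: "i \<in> {1..?N}" "j \<in> {1..?N}" for i j
    proof -
      let ?L = "l (k, i, j)"
      have limw: "(\<lambda>n. ?w (r n) i j) \<longlonglongrightarrow> ?L" using lim[of "(k, i, j)"] vw[OF ij] by simp
      have xi: "xk k (r n) i \<in> X (r n)" "xk k (r n) j \<in> X (r n)" for n using xkin ij by auto
      have "C ?\<tau> \<le> ?L"
      proof (rule LIMSEQ_le_const[OF limw], intro exI[of _ 0] allI impI)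
        fix n :: nat
        show "C ?\<tau> \<le> ?w (r n) i j" by (rule Mge[OF xi(1)[of n] xi(2)[of n] tk(1)])
      qed
      then have Lpos: "0 < ?L" using Cpos tk[of k] by force
      have "?L \<le> 1"
      proof (rule LIMSEQ_le_const2[OF limw], intro exI[of _ 0] allI impI)
        fix n :: nat
        have "?w (r n) i j \<in> {0..1}" by (rule rng[OF xi(1)[of n] xi(2)[of n] less_imp_le[OF tk(1)]])
        then show "?w (r n) i j \<le> 1" by simp
      qed
      then have str: "T ?L (1 - ?\<delta>) < ?L" using T_strict[OF tnorm tn1 Lpos] ek[of k] by auto
      have eqL: "TT T ?L (1 - ?\<delta>) = T ?L (1 - ?\<delta>)" using TT_eq[OF tnorm] Lpos \<open>?L \<le> 1\<close> ek[of k] by auto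
      define g where "g = ?L - T ?L (1 - ?\<delta>)"
      have g: "0 < g" using str by (simp add: g_def)
      have l2: "(\<lambda>n. TT T (?w (r n) i j) (1 - ?\<delta>)) \<longlonglongrightarrow> TT T ?L (1 - ?\<delta>)"
        by (intro tendsto_TT[OF tnorm] limw tendsto_const)
      have ev1: "eventually (\<lambda>n. dist (?w (r n) i j) ?L < g/2) sequentially"
        using limw half_gt_zero[OF g] unfolding tendsto_iff by blast
      have ev2: "eventually (\<lambda>n. dist (TT T (?w (r n) i j) (1 - ?\<delta>)) (TT T ?L (1 - ?\<delta>)) < g/2) sequentially"
        using l2 half_gt_zero[OF g] unfolding tendsto_iff by blast
      obtain n0 where n0: "\<forall>n\<ge>n0. dist (?w (r n) i j) ?L < g/2 \<and>
          dist (TT T (?w (r n) i j) (1 - ?\<delta>)) (TT T ?L (1 - ?\<delta>)) < g/2"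
        using eventually_conj[OF ev1 ev2] unfolding eventually_sequentially by blast
      show ?thesis
      proof (intro exI allI impI)
        fix n m assume nm: "n0 \<le> n" "n0 \<le> m"
        have h1: "dist (?w (r n) i j) ?L < g/2" using n0 nm(1) by blast
        have h2: "dist (TT T (?w (r m) i j) (1 - ?\<delta>)) (TT T ?L (1 - ?\<delta>)) < g/2" using n0 nm(2) by blast
        show "TT T (?w (r m) i j) (1 - ?\<delta>) \<le> ?w (r n) i j"
          using h1 h2 eqL unfolding g_def dist_real_def abs_less_iff by (elim conjE) argo
      qed
    qed
    have "\<forall>p\<in>{1..?N} \<times> {1..?N}. eventually (\<lambda>n0. \<forall>n\<ge>n0. \<forall>m\<ge>n0.
        TT T (?w (r m) (fst p) (snd p)) (1 - ?\<delta>) \<le> ?w (r n) (fst p) (snd p)) sequentially"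
    proof
      fix p assume "p \<in> {1..?N} \<times> {1..?N}"
      then obtain n0 where "\<forall>n\<ge>n0. \<forall>m\<ge>n0. TT T (?w (r m) (fst p) (snd p)) (1 - ?\<delta>) \<le> ?w (r n) (fst p) (snd p)"
        using pw[of "fst p" "snd p"] by auto
      then show "eventually (\<lambda>n0. \<forall>n\<ge>n0. \<forall>m\<ge>n0.
        TT T (?w (r m) (fst p) (snd p)) (1 - ?\<delta>) \<le> ?w (r n) (fst p) (snd p)) sequentially"
        unfolding eventually_sequentially by (meson order.trans)
    qed
    from eventually_ball_finite[OF _ this] obtain n0 where n0:
      "\<forall>p\<in>{1..?N} \<times> {1..?N}. \<forall>n\<ge>n0. \<forall>m\<ge>n0.
        TT T (?w (r m) (fst p) (snd p)) (1 - ?\<delta>) \<le> ?w (r n) (fst p) (snd p)"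
      unfolding eventually_sequentially by auto
    have close: "T (?w (r m) i j) (1 - ?\<delta>) \<le> ?w (r n) i j"
      if "n \<ge> n0" "m \<ge> n0" "i \<in> {1..?N}" "j \<in> {1..?N}" for n m i j
    proof -
      have ij: "(i, j) \<in> {1..?N} \<times> {1..?N}" using that by auto
      have "TT T (?w (r m) (fst (i, j)) (snd (i, j))) (1 - ?\<delta>) \<le> ?w (r n) (fst (i, j)) (snd (i, j))"
        using bspec[OF n0 ij] that(1,2) by blast
      then have "TT T (?w (r m) i j) (1 - ?\<delta>) \<le> ?w (r n) i j" by simp
      then show ?thesis using TT_eq[OF tnorm] rng[OF xkin xkin] that tk[of k] ek[of k] by auto
    qed
    have propg: "T (M (r m) (xk k (r m) i) (xk k (r m) j) u) (1 - ?\<delta>) \<le> M (r n) (xk k (r n) i) (xk k (r n) j) u"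
      if "n \<ge> n0" "m \<ge> n0" "i \<in> {1..?N}" "j \<in> {1..?N}" "u > ?\<tau>" for n m i j u
    proof (rule ratio_prop[OF tnorm])
      show "M (r n) (xk k (r n) i) (xk k (r n) j) u \<in> {0..1}"
        "M (r m) (xk k (r m) i) (xk k (r m) j) u \<in> {0..1}"
        "?w (r n) i j \<in> {0..1}" "?w (r m) i j \<in> {0..1}"
        using rng xkin that tk[of k] by (auto simp: less_imp_le)
      show "0 < ?\<delta>" "?\<delta> < 1" using ek by auto
      show "T (?w (r m) i j) (1 - ?\<delta>) \<le> ?w (r n) i j" by (rule close[OF that(1-4)])
      have "T (C ?\<tau>) (1 - ?\<delta>) \<le> T (?w (r m) i j) (1 - ?\<delta>)"
        by (rule T_mono[OF tnorm]) (use Cpos tk[of k] ek[of k] Mge[OF xkin xkin] rng[OF xkin xkin] that in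
            \<open>auto simp: less_imp_le\<close>)
      then show "0 < T (?w (r m) i j) (1 - ?\<delta>)" using ek[of k] by linarith
      show "M (r n) (xk k (r n) i) (xk k (r n) j) u < M (r m) (xk k (r m) i) (xk k (r m) j) u \<longrightarrow>
        M (r n) (xk k (r n) i) (xk k (r n) j) u / T (M (r m) (xk k (r m) i) (xk k (r m) j) u) (1 - ?\<delta>)
        \<ge> ?w (r n) i j / T (?w (r m) i j) (1 - ?\<delta>)"
      proof -
        have "\<forall>n m s i j. s > tk k \<longrightarrow> i \<in> {1..Nk k} \<longrightarrow> j \<in> {1..Nk k} \<longrightarrow>
                M n (xk k n i) (xk k n j) s < M m (xk k m i) (xk k m j) s \<longrightarrow>
                M n (xk k n i) (xk k n j) s / T (M m (xk k m i) (xk k m j) s) (1 - ek k)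
                  \<ge> M n (xk k n i) (xk k n j) (tk k) / T (M m (xk k m i) (xk k m j) (tk k)) (1 - ek k)"
          using xk[of k] unfolding P_def by (rule conjunct2)
        then show ?thesis using that(3,4,5) by blast
      qed
    qed
    show "\<exists>n0. \<forall>n\<ge>n0. \<forall>m\<ge>n0. M_GH T (X (r n)) (M (r n)) (X (r m)) (M (r m)) t > 1 - e"
    proof (intro exI allI impI)
      fix n m assume nm: "n0 \<le> n" "n0 \<le> m"
      have fa: "\<forall>n. fnet (X n) (M n) (tk k) (ek k) (Nk k) (xk k n)" using xk[of k] unfolding P_def by (rule conjunct1)
      have netn: "\<forall>a\<in>X (r n). \<exists>i\<in>{1..?N}. M (r n) a (xk k (r n) i) ?\<tau> > 1 - ?\<delta>"
        using fa[rule_format, of "r n"] unfolding fnet_def by (rule conjunct2)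
      have netm: "\<forall>a\<in>X (r m). \<exists>i\<in>{1..?N}. M (r m) a (xk k (r m) i) ?\<tau> > 1 - ?\<delta>"
        using fa[rule_format, of "r m"] unfolding fnet_def by (rule conjunct2)
      have "T (1 - ?\<delta>) (1 - ?\<delta>) \<le> M_GH T (X (r n)) (M (r n)) (X (r m)) (M (r m)) t"
      proof (rule glue_MGH[where x = "xk k (r n)" and y = "xk k (r m)" and N = "Nk k" and \<tau> = "tk k"])
        show "cont_tnorm T" by (rule tnorm)
        show "na_fuzzy_metric (X (r n)) (M (r n)) T" "na_fuzzy_metric (X (r m)) (M (r m)) T" by (rule spaces)+
        show "\<forall>i\<in>{1..?N}. xk k (r n) i \<in> X (r n)" "\<forall>i\<in>{1..?N}. xk k (r m) i \<in> X (r m)"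
          using xkin by auto
        show "0 < ?\<tau>" "0 < ?\<delta>" "?\<delta> < 1" using tk ek by auto
        show "\<forall>u>?\<tau>. \<forall>i\<in>{1..?N}. \<forall>j\<in>{1..?N}. T (M (r m) (xk k (r m) i) (xk k (r m) j) u) (1 - ?\<delta>)
            \<le> M (r n) (xk k (r n) i) (xk k (r n) j) u"
          using propg nm by blast
        show "\<forall>u>?\<tau>. \<forall>i\<in>{1..?N}. \<forall>j\<in>{1..?N}. T (M (r n) (xk k (r n) i) (xk k (r n) j) u) (1 - ?\<delta>)
            \<le> M (r m) (xk k (r m) i) (xk k (r m) j) u"
          using propg nm by blast
        show "X (r n) \<noteq> {}" "X (r m) \<noteq> {}" by (rule nonempty)+
        show "\<forall>a\<in>X (r n). \<exists>i\<in>{1..?N}. M (r n) a (xk k (r n) i) ?\<tau> > 1 - ?\<delta>" by (rule netn)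
        show "\<forall>a\<in>X (r m). \<exists>i\<in>{1..?N}. M (r m) a (xk k (r m) i) ?\<tau> > 1 - ?\<delta>" by (rule netm)
        show "?\<tau> < t" using tkk by auto
      qed
      then show "M_GH T (X (r n)) (M (r n)) (X (r m)) (M (r m)) t > 1 - e" using goodT by linarith
    qed
  qed
qed

end
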